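(* For every integer $n\ge4$ and every integer $d$, $p_{n,d}(1,2)=p_{n,d}(1,3)$.
   Context: A cycle $(c_1\cdots c_k)$ means $c_1\mapsto c_2\mapsto\cdots\mapsto c_k\mapsto c_1$; $\operatorname{cdes}(c)=\lvert\{t\in[k]:c_t>c_{t+1}\}\rvert$, $\operatorname{casc}(c)=\lvert\{t\in[k]:c_t<c_{t+1}\}\rvert$ with $c_{k+1}=c_1$; the cyclic weight of a cycle is $\min(\operatorname{cdes}(c),\operatorname{casc}(c))$ and the cyclic weight of a permutation is the sum over its cycles. An odd order permutation is one all of whose cycles have odd length. $p_{n,d}(i,j)$ is the number of odd order permutations $\pi$ of $[n]$ with cyclic weight $d$ such that $\pi(i)=n$ and $\pi(n)=j$ (i.e. containing $i\,n\,j$ as a cyclic factor). *)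

theory Defs
  imports "HOL-Combinatorics.Permutations"
begin

text \<open>Writing a cycle as
  (c_1 ... c_k) with c_{t+1} = p c_t, a cyclic descent c_t > c_{t+1} is an element
  y of the cycle with y > p y, and a cyclic ascent one with y < p y.\<close>

definition cyc :: "(nat \<Rightarrow> nat) \<Rightarrow> nat \<Rightarrow> nat set" where
  "cyc p x = {(p ^^ k) x | k. True}"

definition cycles_of :: "nat \<Rightarrow> (nat \<Rightarrow> nat) \<Rightarrow> nat set set" where
  "cycles_of n p = cyc p ` {1..n}"

definition cdes :: "(nat \<Rightarrow> nat) \<Rightarrow> nat set \<Rightarrow> nat" where
  "cdes p C = card {y \<in> C. y > p y}"

definition casc :: "(nat \<Rightarrow> nat) \<Rightarrow> nat set \<Rightarrow> nat" where
  "casc p C = card {y \<in> C. y < p y}"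

definition cyc_weight :: "nat \<Rightarrow> (nat \<Rightarrow> nat) \<Rightarrow> nat" where
  "cyc_weight n p = (\<Sum>C\<in>cycles_of n p. min (cdes p C) (casc p C))"

definition odd_order :: "nat \<Rightarrow> (nat \<Rightarrow> nat) \<Rightarrow> bool" where
  "odd_order n p = (\<forall>C\<in>cycles_of n p. odd (card C))"

definition pnd :: "nat \<Rightarrow> int \<Rightarrow> nat \<Rightarrow> nat \<Rightarrow> nat" where
  "pnd n d i j = card {p. p permutes {1..n} \<and> odd_order n p \<and> int (cyc_weight n p) = d
                         \<and> p i = n \<and> p n = j}"

end

theory Submission
  imports Defs "HOL-Combinatorics.Orbits"
begin


lemma cyc_orbit:
  assumes "p permutes {1..n::nat}"
  shows "cyc p x = orbit p x"
proof -
  have "permutation p" using assms permutation_permutes by blast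
  then show ?thesis unfolding cyc_def by (simp add: orbit_altdef_permutation)
qed

lemma cycles_of_orbit:
  assumes "p permutes {1..n::nat}"
  shows "cycles_of n p = (\<lambda>x. orbit p x) ` {1..n}"
  unfolding cycles_of_def using cyc_orbit[OF assms] by simp

lemma orbit_in_S:
  assumes "p permutes {1..n::nat}" "x \<in> {1..n}"
  shows "orbit p x \<subseteq> {1..n}"
  using permutes_orbit_subset[OF assms] .

lemma cyclic_p:
  assumes "p permutes {1..n::nat}"
  shows "cyclic_on p (orbit p x)"
  using cyclic_on_orbit[OF assms] by simp

lemma orbit_same:
  assumes "p permutes {1..n::nat}" "y \<in> orbit p x"
  shows "orbit p y = orbit p x"
  using orbit_cyclic_eq3[OF cyclic_p[OF assms(1)] assms(2)] .

lemma self_orbit: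
  assumes "p permutes {1..n::nat}"
  shows "x \<in> orbit p x"
proof -
  have "permutation p" using assms by (simp add: permutation_permutes) blast
  then show ?thesis by (rule permutation_self_in_orbit)
qed

lemma surgery:
  assumes p: "p permutes {1..n::nat}" and q: "q permutes {1..n}"
    and c: "c \<in> {1..n}" and oq: "orbit q c = orbit p c"
    and eq: "\<And>x. x \<notin> orbit p c \<Longrightarrow> q x = p x"
  shows "cycles_of n q = cycles_of n p"
    and "min (cdes q (orbit p c)) (casc q (orbit p c)) = min (cdes p (orbit p c)) (casc p (orbit p c))
         \<Longrightarrow> cyc_weight n q = cyc_weight n p"
proof -
  let ?C = "orbit p c"
  have oo: "orbit q x = orbit p x" if x: "x \<in> {1..n}" for x
  proof (cases "x \<in> ?C")
    case True
    then have "orbit p x = ?C" using orbit_same[OF p] by blast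
    moreover have "orbit q x = ?C" using orbit_same[OF q, of x c] True oq by simp
    ultimately show ?thesis by simp
  next
    case False
    have pc: "p \<in> (UNIV - ?C) \<rightarrow> (UNIV - ?C)"
      using cyclic_on_f_in[OF p cyclic_p[OF p]] by blast
    have "orbit p x = orbit q x"
    proof (rule orbit_cong0[of x "UNIV - ?C"])
      show "x \<in> UNIV - ?C" using False by simp
      show "p \<in> (UNIV - ?C) \<rightarrow> (UNIV - ?C)" by (rule pc)
      show "\<And>y. y \<in> UNIV - ?C \<Longrightarrow> p y = q y" using eq by simp
    qed
    then show ?thesis by simp
  qed
  show cyc: "cycles_of n q = cycles_of n p"
    unfolding cycles_of_orbit[OF p] cycles_of_orbit[OF q] by (rule image_cong) (simp_all add: oo)
  assume m: "min (cdes q ?C) (casc q ?C) = min (cdes p ?C) (casc p ?C)"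
  have "min (cdes q D) (casc q D) = min (cdes p D) (casc p D)" if D: "D \<in> cycles_of n p" for D
  proof (cases "D = ?C")
    case True then show ?thesis using m by simp
  next
    case False
    obtain x where x: "x \<in> {1..n}" "D = orbit p x" using D cycles_of_orbit[OF p] by auto
    have "y \<notin> ?C" if y: "y \<in> D" for y
    proof
      assume "y \<in> ?C"
      then have "orbit p y = ?C" using orbit_same[OF p] by blast
      moreover have "orbit p y = D" using orbit_same[OF p, of y x] y x by simp
      ultimately show False using False by simp
    qed
    then have "\<And>y. y \<in> D \<Longrightarrow> q y = p y" using eq by blast
    then have "{y \<in> D. y > q y} = {y \<in> D. y > p y}" "{y \<in> D. y < q y} = {y \<in> D. y < p y}" by auto
    then show ?thesis unfolding cdes_def casc_def by simp
  qed
  then show "cyc_weight n q = cyc_weight n p"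
    unfolding cyc_weight_def cyc by (rule sum.cong[OF refl])
qed



lemma tr_less:
  fixes a b :: nat
  assumes "\<not> (a = 2 \<and> b = 3)" "\<not> (a = 3 \<and> b = 2)"
  shows "(Transposition.transpose 2 3 a < Transposition.transpose 2 3 b) = (a < b)"
  using assms unfolding Transposition.transpose_def by auto

lemma conj_lemma:
  fixes n :: nat
  defines "t \<equiv> Transposition.transpose (2::nat) 3"
  assumes p: "p permutes {1..n}" and n3: "n \<ge> 3" and p23: "p 2 \<noteq> 3" and p32: "p 3 \<noteq> 2"
  shows "t \<circ> p \<circ> t permutes {1..n}"
    and "odd_order n (t \<circ> p \<circ> t) = odd_order n p"
    and "cyc_weight n (t \<circ> p \<circ> t) = cyc_weight n p"
proof -
  let ?q = "t \<circ> p \<circ> t"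
  let ?S = "{1..n}"
  have tS: "t permutes ?S" unfolding t_def using n3 by (intro permutes_swap_id) auto
  show q: "?q permutes ?S" by (intro permutes_compose tS p)
  have tt: "t (t x) = x" for x unfolding t_def by simp
  have injt: "inj t" unfolding t_def by (rule inj_transpose)
  have ob: "orbit ?q (t x) = t ` orbit p x" for x
  proof -
    have "t ` orbit p x = orbit ?q (t x)"
      by (rule orbit_inverse) (auto simp: tt self_orbit[OF p])
    then show ?thesis by simp
  qed
  have tSS: "t ` ?S = ?S" using permutes_image[OF tS] .
  have cyc: "cycles_of n ?q = (\<lambda>C. t ` C) ` cycles_of n p"
  proof -
    have "cycles_of n ?q = (\<lambda>x. orbit ?q x) ` (t ` ?S)"
      unfolding cycles_of_orbit[OF q] tSS ..
    also have "\<dots> = (\<lambda>x. t ` orbit p x) ` ?S" by (simp add: image_image ob)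
    also have "\<dots> = (\<lambda>C. t ` C) ` cycles_of n p"
      unfolding cycles_of_orbit[OF p] by (simp add: image_image)
    finally show ?thesis .
  qed
  have cardt: "card (t ` C) = card C" for C by (rule card_image) (use injt in \<open>simp add: inj_on_def\<close>)
  show "odd_order n ?q = odd_order n p"
    unfolding odd_order_def cyc by (simp add: cardt)
  have injim: "inj_on (\<lambda>C. t ` C) X" for X
    using injt by (simp add: inj_on_def inj_image_eq_iff)
  have good: "\<not> (x = 2 \<and> p x = 3) \<and> \<not> (x = 3 \<and> p x = 2)" for x using p23 p32 by auto
  have imc: "{y \<in> t ` D. P y} = t ` {x \<in> D. P (t x)}" for D and P :: "nat \<Rightarrow> bool"
  proof
    show "{y \<in> t ` D. P y} \<subseteq> t ` {x \<in> D. P (t x)}"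
    proof
      fix y assume "y \<in> {y \<in> t ` D. P y}"
      then obtain x where "x \<in> D" "y = t x" "P y" by blast
      then show "y \<in> t ` {x \<in> D. P (t x)}" by blast
    qed
    show "t ` {x \<in> D. P (t x)} \<subseteq> {y \<in> t ` D. P y}" by blast
  qed
  have qt: "?q (t x) = t (p x)" for x by (simp add: tt)
  have e1: "(t x > ?q (t x)) = (x > p x)" for x
    unfolding qt using tr_less[of "p x" x] good[of x] unfolding t_def by blast
  have e2: "(t x < ?q (t x)) = (x < p x)" for x
    unfolding qt using tr_less[of x "p x"] good[of x] unfolding t_def by blast
  have des: "{y \<in> t ` D. y > ?q y} = t ` {x \<in> D. x > p x}" for D
    unfolding imc[of D "\<lambda>y. y > ?q y"] e1 ..
  have asc: "{y \<in> t ` D. y < ?q y} = t ` {x \<in> D. x < p x}" for D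
    unfolding imc[of D "\<lambda>y. y < ?q y"] e2 ..
  have cd: "cdes ?q (t ` C) = cdes p C" for C unfolding cdes_def des by (rule cardt)
  have ca: "casc ?q (t ` C) = casc p C" for C unfolding casc_def asc by (rule cardt)
  show "cyc_weight n ?q = cyc_weight n p"
    unfolding cyc_weight_def by (rule sum.reindex_cong[OF injim cyc]) (simp only: cd ca)
qed



definition FF :: "nat \<Rightarrow> nat \<Rightarrow> nat \<Rightarrow> (nat \<Rightarrow> nat) \<Rightarrow> nat \<Rightarrow> nat" where
  "FF n a b p x = (if x \<in> orbit p 1 then
      (if x = 1 then n else if x = n then b else if x = b then a else if x = a then inv p 1
       else if x = p b then 1 else inv p x) else p x)"

lemma FF_props:
  fixes n a b :: nat and p :: "nat \<Rightarrow> nat"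
  assumes p: "p permutes {1..n}" and n4: "n \<ge> 4" and ab: "(a = 2 \<and> b = 3) \<or> (a = 3 \<and> b = 2)"
    and p1: "p 1 = n" and pn: "p n = a" and pa: "p a = b" and odd: "odd_order n p"
  shows "FF n a b p permutes {1..n}" "FF n a b p 1 = n" "FF n a b p n = b" "FF n a b p b = a"
    "odd_order n (FF n a b p)" "cyc_weight n (FF n a b p) = cyc_weight n p"
    "FF n b a (FF n a b p) = p"
proof -
  define C where "C = orbit p 1"
  define s where "s = FF n a b p"
  define A where "A = C - {1, n, a, b}"
  define z where "z = inv p 1"
  let ?S = "{1..n}"
  have pi1: "p (inv p x) = x" for x using permutes_inverses(1)[OF p] .
  have pi2: "inv p (p x) = x" for x using permutes_inverses(2)[OF p] .
  have pinj: "p x = p y \<longleftrightarrow> x = y" for x y using pi2 by metis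
  have cyc: "cyclic_on p C" unfolding C_def using cyclic_p[OF p] .
  have CS: "C \<subseteq> ?S" unfolding C_def using orbit_in_S[OF p] n4 by auto
  have in1: "1 \<in> C" unfolding C_def using self_orbit[OF p] .
  have Cstep: "p y \<in> C" if "y \<in> C" for y by (rule cyclic_on_inI[OF cyc that])
  have Cback: "y \<in> C" if "p y \<in> C" for y by (rule cyclic_on_f_in[OF p cyc that])
  have inn: "n \<in> C" using Cstep[OF in1] p1 by simp
  have ina: "a \<in> C" using Cstep[OF inn] pn by simp
  have inb: "b \<in> C" using Cstep[OF ina] pa by simp
  have dist: "1 \<noteq> n" "1 \<noteq> a" "1 \<noteq> b" "n \<noteq> a" "n \<noteq> b" "a \<noteq> b" "a < n" "b < n" "1 < a" "1 < b"
    using ab n4 by auto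
  have pb1: "p b \<noteq> 1"
  proof
    assume pb: "p b = 1"
    have "y \<in> {1, n, a, b}" if "y \<in> C" for y
      using that unfolding C_def
    proof induction
      case base then show ?case using p1 by simp
    next
      case (step y) then show ?case using p1 pn pa pb by auto
    qed
    then have "C = {1, n, a, b}" using in1 inn ina inb by auto
    then have "card C = 4" using dist by simp
    moreover have "C \<in> cycles_of n p" unfolding cycles_of_orbit[OF p] C_def using n4 by auto
    ultimately show False using odd unfolding odd_order_def by auto
  qed
  have Aprop: "4 \<le> y \<and> y < n" if "y \<in> A" for y
    using that CS ab unfolding A_def by fastforce
  have pbA: "p b \<in> A" unfolding A_def using Cstep[OF inb] pb1 pinj[of b 1] pinj[of b n] pinj[of b a] p1 pn pa dist
    by auto
  have zA: "z \<in> A" unfolding A_def z_def using Cback[of "inv p 1"] pi1[of 1] in1 p1 pn pa pb1 dist by auto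
  have pz: "p z = 1" unfolding z_def by (rule pi1)
  have pA: "p y \<in> A \<or> p y = 1" if "y \<in> A" for y
    using that Cstep[of y] unfolding A_def using pinj[of y 1] pinj[of y n] pinj[of y a] p1 pn pa by auto
  have iA: "inv p y \<in> A" if "y \<in> A" "y \<noteq> p b" for y
    using that Cback[of "inv p y"] pi1[of y] unfolding A_def using p1 pn pa by auto
  have s1: "s 1 = n" unfolding s_def FF_def C_def[symmetric] using in1 by simp
  have sn: "s n = b" unfolding s_def FF_def C_def[symmetric] using inn dist by simp
  have sb: "s b = a" unfolding s_def FF_def C_def[symmetric] using inb dist by simp
  have sa: "s a = z" unfolding s_def FF_def C_def[symmetric] z_def using ina dist by simp
  have spb: "s (p b) = 1" unfolding s_def FF_def C_def[symmetric] using pbA unfolding A_def by auto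
  have sA: "s y = inv p y" if "y \<in> A" "y \<noteq> p b" for y
    unfolding s_def FF_def C_def[symmetric] using that unfolding A_def by auto
  have sout: "s y = p y" if "y \<notin> C" for y
    unfolding s_def FF_def C_def[symmetric] using that by auto
  have Ccases: "y = 1 \<or> y = n \<or> y = a \<or> y = b \<or> y = p b \<or> (y \<in> A \<and> y \<noteq> p b)" if "y \<in> C" for y
    using that unfolding A_def by auto
  have AC: "A \<subseteq> C" unfolding A_def by auto
  have sC: "s y \<in> C" if "y \<in> C" for y
    using Ccases[OF that] s1 sn sb sa spb sA iA inn inb ina in1 zA AC by auto
  have Cout: "p y \<notin> C" if "y \<notin> C" for y using Cback that by blast
  have Aprops: "y \<noteq> 1" "y \<noteq> n" "y \<noteq> a" "y \<noteq> b" "y \<in> C" if "y \<in> A" for y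
    using that unfolding A_def by auto
  have injC: "x = y" if "x \<in> C" "y \<in> C" "s x = s y" for x y
  proof -
    have vA: "s w \<in> A" if "w \<in> A" "w \<noteq> p b" for w using sA iA that by simp
    have vz: "s w \<noteq> z" if "w \<in> A" "w \<noteq> p b" for w using sA[OF that] pi1[of w] pz that Aprops(1) by metis
    show ?thesis using Ccases[OF that(1)] Ccases[OF that(2)] that(3) s1 sn sb sa spb sA dist zA
      vA vz Aprops pi1 by (smt (verit))
  qed
  have sinj: "inj_on s ?S"
  proof (rule inj_onI)
    fix x y assume xy: "x \<in> ?S" "y \<in> ?S" "s x = s y"
    show "x = y"
    proof (cases "x \<in> C")
      case True
      show ?thesis
      proof (cases "y \<in> C")
        case True then show ?thesis using injC \<open>x \<in> C\<close> xy by blast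
      next
        case False then show ?thesis using sC[OF \<open>x \<in> C\<close>] sout Cout xy(3) by metis
      qed
    next
      case False
      show ?thesis
      proof (cases "y \<in> C")
        case True then show ?thesis using sC[OF True] sout Cout xy(3) False by metis
      next
        case F2: False then show ?thesis using False sout xy(3) pinj by metis
      qed
    qed
  qed
  have simg: "s ` ?S \<subseteq> ?S"
  proof
    fix y assume "y \<in> s ` ?S"
    then obtain x where x: "x \<in> ?S" "y = s x" by blast
    show "y \<in> ?S"
    proof (cases "x \<in> C")
      case True then show ?thesis using sC CS x by blast
    next
      case False then show ?thesis using sout x permutes_in_image[OF p] by metis
    qed
  qed
  have sperm: "s permutes ?S"
  proof (rule bij_imp_permutes)
    show "bij_betw s ?S ?S" unfolding bij_betw_def using sinj endo_inj_surj[OF _ simg sinj] by simp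
    show "s x = x" if "x \<notin> ?S" for x
    proof -
      have "x \<notin> C" using that CS by blast
      then show ?thesis using sout permutes_not_in[OF p that] by simp
    qed
  qed
  show "FF n a b p permutes {1..n}" using sperm unfolding s_def .
  have orb1: "orbit s 1 \<subseteq> C"
  proof
    fix y assume "y \<in> orbit s 1"
    then show "y \<in> C"
    proof induction
      case base then show ?case using s1 inn by simp
    next
      case (step y) then show ?case using sC by blast
    qed
  qed
  have nO: "n \<in> orbit s 1" using orbit.base[of s 1] s1 by simp
  have bO: "b \<in> orbit s 1" using orbit.step[OF nO] sn by simp
  have aO: "a \<in> orbit s 1" using orbit.step[OF bO] sb by simp
  have zO: "z \<in> orbit s 1" using orbit.step[OF aO] sa by simp
  have indA: "\<forall>y. y \<in> A \<longrightarrow> (p ^^ Suc j) y = 1 \<longrightarrow> y \<in> orbit s 1" for j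
  proof (induction j)
    case 0
    show ?case
    proof (intro allI impI)
      fix y assume "y \<in> A" "(p ^^ Suc 0) y = 1"
      then have "p y = 1" by simp
      then have "y = z" unfolding z_def using pi2[of y] by simp
      then show "y \<in> orbit s 1" using zO by simp
    qed
  next
    case (Suc j)
    show ?case
    proof (intro allI impI)
      fix y assume y: "y \<in> A" "(p ^^ Suc (Suc j)) y = 1"
      show "y \<in> orbit s 1"
      proof (cases "p y = 1")
        case True
        then have "y = z" unfolding z_def using pi2[of y] by simp
        then show ?thesis using zO by simp
      next
        case False
        then have pyA: "p y \<in> A" using pA[OF y(1)] by simp
        have "(p ^^ Suc j) (p y) = 1" using y(2) by (simp only: funpow_Suc_right o_apply)
        then have pyO: "p y \<in> orbit s 1" using Suc.IH pyA by simp
        have pypb: "p y \<noteq> p b" using Aprops(4)[OF y(1)] pinj by simp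
        have "s (p y) \<in> orbit s 1" by (rule orbit.step[OF pyO])
        moreover have "s (p y) = y" using sA[OF pyA pypb] pi2 by simp
        ultimately show ?thesis by simp
      qed
    qed
  qed
  have AO: "y \<in> orbit s 1" if "y \<in> A" for y
  proof -
    have "orbit p y = C" unfolding C_def using orbit_same[OF p] Aprops(5)[OF that] unfolding C_def by blast
    then have "1 \<in> orbit p y" using in1 by simp
    then obtain k where "(p ^^ k) y = 1" "0 < k" unfolding orbit_altdef by auto
    then obtain j where "(p ^^ Suc j) y = 1" by (metis gr0_conv_Suc)
    then show ?thesis using indA that by blast
  qed
  have oneO: "1 \<in> orbit s 1" using orbit.step[OF AO[OF pbA]] spb by simp
  have orbs: "orbit s 1 = C"
  proof
    show "C \<subseteq> orbit s 1"
    proof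
      fix y assume "y \<in> C"
      then show "y \<in> orbit s 1" using Ccases[of y] oneO nO aO bO AO pbA by blast
    qed
  qed (rule orb1)
  have in1S: "(1::nat) \<in> ?S" using n4 by simp
  have eqout: "\<And>x. x \<notin> orbit p 1 \<Longrightarrow> s x = p x" using sout unfolding C_def by blast
  note surg = surgery[OF p sperm in1S orbs[unfolded C_def] eqout]
  have cyceq: "cycles_of n s = cycles_of n p" using surg(1) .
  show "odd_order n (FF n a b p)" using odd unfolding odd_order_def s_def[symmetric] cyceq .
  have finC: "finite C" using CS finite_subset by blast
  have finA: "finite A" using finC unfolding A_def by simp
  define U where "U = {y \<in> A. p y \<in> A \<and> y < p y}"
  define Dd where "Dd = {y \<in> A. p y \<in> A \<and> p y < y}"
  have finU: "finite U" "finite Dd" using finA unfolding U_def Dd_def by auto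
  have UA: "U \<subseteq> A" "Dd \<subseteq> A" unfolding U_def Dd_def by auto
  have pUA: "p ` U \<subseteq> A" "p ` Dd \<subseteq> A" unfolding U_def Dd_def by auto
  have cardpU: "card (p ` U) = card U" "card (p ` Dd) = card Dd"
    using pinj by (auto intro!: card_image simp: inj_on_def)
  have sAi: "s y = inv p y" "inv p y \<in> A" "p (inv p y) = y" if "y \<in> A" "y \<noteq> p b" for y
    using sA iA pi1 that by auto
  have pbb: "p y \<noteq> p b" if "y \<in> A" for y using pinj Aprops(4)[OF that] by simp
  have sp: "s (p y) = y" if "y \<in> A" "p y \<in> A" for y using sA[OF that(2) pbb[OF that(1)]] pi2 by simp
  have zbound: "4 \<le> z" "4 \<le> p b" using Aprop zA pbA by auto
  have bpb: "b < p b" "a < p b" "a < z" "b < z" using zbound ab by auto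
  have X1: "{y \<in> C. s y < y} = (if a < b then {n, p b, b} else {n, p b}) \<union> p ` U"
  proof (rule set_eqI, rule iffI)
    fix y assume y: "y \<in> {y \<in> C. s y < y}"
    then have yC: "y \<in> C" and lt: "s y < y" by auto
    show "y \<in> (if a < b then {n, p b, b} else {n, p b}) \<union> p ` U"
    proof -
      { assume yA: "y \<in> A" "y \<noteq> p b"
        have w: "inv p y \<in> A" "p (inv p y) = y" "s y = inv p y" using sAi[OF yA] by auto
        then have "inv p y \<in> U" unfolding U_def using yA lt by auto
        then have "y \<in> p ` U" using w(2) by force }
      then show ?thesis using Ccases[OF yC] lt s1 sn sb sa spb dist zbound ab by auto
    qed
  next
    fix y assume y: "y \<in> (if a < b then {n, p b, b} else {n, p b}) \<union> p ` U"
    { fix w assume "w \<in> U"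
      then have "p w \<in> C \<and> s (p w) < p w" using sp[of w] UA pUA AC unfolding U_def by auto }
    then show "y \<in> {y \<in> C. s y < y}" using y inn pbA AC inb sn spb sb dist zbound
      by (auto split: if_splits)
  qed
  have Y1: "{y \<in> C. y < p y} = (if a < b then {1, b, a} else {1, b}) \<union> U"
  proof (rule set_eqI, rule iffI)
    fix y assume y: "y \<in> {y \<in> C. y < p y}"
    then have yC: "y \<in> C" and lt: "y < p y" by auto
    have y1: "1 \<le> y" using CS yC by auto
    { assume yA: "y \<in> A"
      have "p y \<noteq> 1" using lt y1 by auto
      then have "y \<in> U" using pA[OF yA(1)] yA lt unfolding U_def by auto }
    then show "y \<in> (if a < b then {1, b, a} else {1, b}) \<union> U"
      using Ccases[OF yC] lt p1 pn pa dist ab zbound y1 pbA by auto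
  next
    fix y assume y: "y \<in> (if a < b then {1, b, a} else {1, b}) \<union> U"
    then show "y \<in> {y \<in> C. y < p y}" using in1 ina inb UA AC p1 pn pa pbA zbound Aprop dist ab bpb
      unfolding U_def by (auto split: if_splits)
  qed
  have X2: "{y \<in> C. y < s y} = (if b < a then {1, a, b} else {1, a}) \<union> p ` Dd"
  proof (rule set_eqI, rule iffI)
    fix y assume y: "y \<in> {y \<in> C. y < s y}"
    then have yC: "y \<in> C" and lt: "y < s y" by auto
    show "y \<in> (if b < a then {1, a, b} else {1, a}) \<union> p ` Dd"
    proof -
      { assume yA: "y \<in> A" "y \<noteq> p b"
        have w: "inv p y \<in> A" "p (inv p y) = y" "s y = inv p y" using sAi[OF yA] by auto
        then have "inv p y \<in> Dd" unfolding Dd_def using yA lt by auto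
        then have "y \<in> p ` Dd" using w(2) by force }
      then show ?thesis using Ccases[OF yC] lt s1 sn sb sa spb dist zbound ab bpb by auto
    qed
  next
    fix y assume y: "y \<in> (if b < a then {1, a, b} else {1, a}) \<union> p ` Dd"
    { fix w assume "w \<in> Dd"
      then have "p w \<in> C \<and> p w < s (p w)" using sp[of w] UA pUA AC unfolding Dd_def by auto }
    then show "y \<in> {y \<in> C. y < s y}" using y in1 ina inb s1 sa sb dist zbound bpb
      by (auto split: if_splits)
  qed
  have Y2: "{y \<in> C. p y < y} = (if b < a then {n, z, a} else {n, z}) \<union> Dd"
  proof (rule set_eqI, rule iffI)
    fix y assume y: "y \<in> {y \<in> C. p y < y}"
    then have yC: "y \<in> C" and lt: "p y < y" by auto
    { assume yA: "y \<in> A" "p y \<noteq> 1"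
      then have "y \<in> Dd" using pA[OF yA(1)] yA lt unfolding Dd_def by auto }
    moreover have "p y = 1 \<Longrightarrow> y = z" unfolding z_def using pi2[of y] by simp
    ultimately show "y \<in> (if b < a then {n, z, a} else {n, z}) \<union> Dd"
      using Ccases[OF yC] lt p1 pn pa dist ab zbound bpb pbA by auto
  next
    fix y assume y: "y \<in> (if b < a then {n, z, a} else {n, z}) \<union> Dd"
    then show "y \<in> {y \<in> C. p y < y}" using inn ina zA UA AC p1 pn pa pz zbound Aprop dist ab bpb
      unfolding Dd_def by (auto split: if_splits)
  qed
  have nA: "n \<notin> A" "a \<notin> A" "b \<notin> A" "1 \<notin> A" unfolding A_def by auto
  have pbpU: "p b \<notin> p ` U" using nA(3) UA pinj by auto
  have zD: "z \<notin> Dd" using pz nA(4) unfolding Dd_def by auto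
  have pbn: "p b \<noteq> n" "p b \<noteq> b" "z \<noteq> n" "z \<noteq> a" using pbA zA nA by auto
  have card1: "card {y \<in> C. s y < y} = (if a < b then 3 else 2) + card U"
    unfolding X1 using pUA(1) nA pbpU pbn dist finU cardpU
    by (subst card_Un_disjoint) auto
  have card2: "card {y \<in> C. y < p y} = (if a < b then 3 else 2) + card U"
    unfolding Y1 using UA(1) nA dist finU
    by (subst card_Un_disjoint) auto
  have card3: "card {y \<in> C. y < s y} = (if b < a then 3 else 2) + card Dd"
    unfolding X2 using pUA(2) nA dist finU cardpU
    by (subst card_Un_disjoint) auto
  have card4: "card {y \<in> C. p y < y} = (if b < a then 3 else 2) + card Dd"
    unfolding Y2 using UA(2) nA zD pbn dist finU
    by (subst card_Un_disjoint) auto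
  have "min (cdes s C) (casc s C) = min (cdes p C) (casc p C)"
    unfolding cdes_def casc_def card1 card2 card3 card4 by (simp add: min.commute)
  then have "cyc_weight n s = cyc_weight n p" using surg(2) unfolding C_def by blast
  then show "cyc_weight n (FF n a b p) = cyc_weight n p" unfolding s_def .
  show "FF n a b p 1 = n" "FF n a b p n = b" "FF n a b p b = a" using s1 sn sb unfolding s_def by auto
  have invs: "inv s y = x \<longleftrightarrow> s x = y" for x y using permutes_inv_eq[OF sperm] .
  have is1: "inv s 1 = p b" using invs spb by simp
  have isx: "inv s x = p x" if "x \<in> A" "x \<noteq> z" for x
  proof -
    have "p x \<noteq> 1" using that pi2[of x] unfolding z_def by auto
    then have "p x \<in> A" using pA[OF that(1)] by simp
    then show ?thesis using invs sp[OF that(1)] by simp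
  qed
  have "FF n b a s x = p x" for x
  proof (cases "x \<in> C")
    case True
    have "x = 1 \<or> x = n \<or> x = a \<or> x = b \<or> (x \<in> A \<and> x = z) \<or> (x \<in> A \<and> x \<noteq> z)"
      using True unfolding A_def by auto
    then show ?thesis unfolding FF_def orbs using True p1 pn pa dist is1 sa isx pz nA by auto
  next
    case False
    then show ?thesis unfolding FF_def orbs using sout by simp
  qed
  then show "FF n b a (FF n a b p) = p" unfolding s_def[symmetric] by (rule ext)
qed


lemma card_eq_witness:
  assumes "\<forall>x\<in>X. g (f x) = x" "\<forall>y\<in>Y. f (g y) = y" "f ` X \<subseteq> Y" "g ` Y \<subseteq> X"
  shows "card X = card Y"
  using bij_betw_same_card[OF bij_betw_byWitness[OF assms]] .

theorem lemma4p2: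
  fixes n :: nat and d :: int
  assumes "n \<ge> 4"
  shows "pnd n d 1 2 = pnd n d 1 3"
proof -
  let ?S = "{1..n}"
  define Q where "Q j = {p. p permutes ?S \<and> odd_order n p \<and> int (cyc_weight n p) = d \<and> p 1 = n \<and> p n = j}" for j
  have pndQ: "pnd n d 1 j = card (Q j)" for j unfolding pnd_def Q_def ..
  have finQ: "finite (Q j)" for j
    by (rule finite_subset[OF _ finite_permutations[of ?S]]) (auto simp: Q_def)
  define Q2a where "Q2a = {p \<in> Q 2. p 2 = 3}"
  define Q2b where "Q2b = {p \<in> Q 2. p 2 \<noteq> 3}"
  define Q3a where "Q3a = {p \<in> Q 3. p 3 = 2}"
  define Q3b where "Q3b = {p \<in> Q 3. p 3 \<noteq> 2}"
  have c2: "card (Q 2) = card Q2a + card Q2b"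
  proof -
    have "Q 2 = Q2a \<union> Q2b" unfolding Q2a_def Q2b_def by auto
    moreover have "finite Q2a" "finite Q2b" using finQ[of 2] unfolding Q2a_def Q2b_def by auto
    moreover have "Q2a \<inter> Q2b = {}" unfolding Q2a_def Q2b_def by auto
    ultimately show ?thesis using card_Un_disjoint[of Q2a Q2b] by simp
  qed
  have c3: "card (Q 3) = card Q3a + card Q3b"
  proof -
    have "Q 3 = Q3a \<union> Q3b" unfolding Q3a_def Q3b_def by auto
    moreover have "finite Q3a" "finite Q3b" using finQ[of 3] unfolding Q3a_def Q3b_def by auto
    moreover have "Q3a \<inter> Q3b = {}" unfolding Q3a_def Q3b_def by auto
    ultimately show ?thesis using card_Un_disjoint[of Q3a Q3b] by simp
  qed
  have n4: "n \<ge> 4" by fact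
  have ca: "card Q2a = card Q3a"
  proof (rule card_eq_witness[of Q2a "FF n 3 2" "FF n 2 3"])
    show "\<forall>x\<in>Q2a. FF n 3 2 (FF n 2 3 x) = x"
      using FF_props(7)[OF _ n4, of _ 2 3] unfolding Q2a_def Q_def by auto
    show "\<forall>y\<in>Q3a. FF n 2 3 (FF n 3 2 y) = y"
      using FF_props(7)[OF _ n4, of _ 3 2] unfolding Q3a_def Q_def by auto
    show "FF n 2 3 ` Q2a \<subseteq> Q3a"
    proof
      fix y assume "y \<in> FF n 2 3 ` Q2a"
      then obtain p where p: "p \<in> Q2a" "y = FF n 2 3 p" by blast
      then have h: "p permutes ?S" "odd_order n p" "int (cyc_weight n p) = d" "p 1 = n" "p n = 2" "p 2 = 3"
        unfolding Q2a_def Q_def by auto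
      note F = FF_props[OF h(1) n4 _ h(4) h(5) h(6) h(2)]
      show "y \<in> Q3a" unfolding p(2) Q3a_def Q_def using F h(3) by auto
    qed
    show "FF n 3 2 ` Q3a \<subseteq> Q2a"
    proof
      fix y assume "y \<in> FF n 3 2 ` Q3a"
      then obtain p where p: "p \<in> Q3a" "y = FF n 3 2 p" by blast
      then have h: "p permutes ?S" "odd_order n p" "int (cyc_weight n p) = d" "p 1 = n" "p n = 3" "p 3 = 2"
        unfolding Q3a_def Q_def by auto
      note F = FF_props[OF h(1) n4 _ h(4) h(5) h(6) h(2)]
      show "y \<in> Q2a" unfolding p(2) Q2a_def Q_def using F h(3) by auto
    qed
  qed
  define t where "t = Transposition.transpose (2::nat) 3"
  have tt: "t \<circ> (t \<circ> p \<circ> t) \<circ> t = p" for p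
    unfolding t_def by (auto simp: fun_eq_iff)
  have t2: "t x = 2 \<longleftrightarrow> x = 3" "t x = 3 \<longleftrightarrow> x = 2" for x unfolding t_def Transposition.transpose_def by auto
  have tn: "t n = n" "t 1 = 1" "t 2 = 3" "t 3 = 2" using n4 unfolding t_def by auto
  have n3: "n \<ge> 3" using n4 by simp
  have cb: "card Q2b = card Q3b"
  proof (rule card_eq_witness[of Q2b "\<lambda>p. t \<circ> p \<circ> t" "\<lambda>p. t \<circ> p \<circ> t"])
    show "\<forall>x\<in>Q2b. t \<circ> (t \<circ> x \<circ> t) \<circ> t = x" using tt by simp
    show "\<forall>x\<in>Q3b. t \<circ> (t \<circ> x \<circ> t) \<circ> t = x" using tt by simp
    show "(\<lambda>p. t \<circ> p \<circ> t) ` Q2b \<subseteq> Q3b"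
    proof
      fix y assume "y \<in> (\<lambda>p. t \<circ> p \<circ> t) ` Q2b"
      then obtain p where p: "p \<in> Q2b" "y = t \<circ> p \<circ> t" by blast
      then have h: "p permutes ?S" "odd_order n p" "int (cyc_weight n p) = d" "p 1 = n" "p n = 2" "p 2 \<noteq> 3"
        unfolding Q2b_def Q_def by auto
      have h3: "p 3 \<noteq> 2"
      proof
        assume "p 3 = 2"
        then have "p 3 = p n" using h(5) by simp
        then have "(3::nat) = n" using permutes_inj[OF h(1)] unfolding inj_def by blast
        then show False using n4 by simp
      qed
      note T = conj_lemma[OF h(1) n3 h(6) h3, folded t_def]
      have x: "t (p 2) \<noteq> 2" using t2 h(6) by simp
      show "y \<in> Q3b" unfolding p(2) Q3b_def Q_def using T h tn x by auto
    qed
    show "(\<lambda>p. t \<circ> p \<circ> t) ` Q3b \<subseteq> Q2b"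
    proof
      fix y assume "y \<in> (\<lambda>p. t \<circ> p \<circ> t) ` Q3b"
      then obtain p where p: "p \<in> Q3b" "y = t \<circ> p \<circ> t" by blast
      then have h: "p permutes ?S" "odd_order n p" "int (cyc_weight n p) = d" "p 1 = n" "p n = 3" "p 3 \<noteq> 2"
        unfolding Q3b_def Q_def by auto
      have h2: "p 2 \<noteq> 3"
      proof
        assume "p 2 = 3"
        then have "p 2 = p n" using h(5) by simp
        then have "(2::nat) = n" using permutes_inj[OF h(1)] unfolding inj_def by blast
        then show False using n4 by simp
      qed
      note T = conj_lemma[OF h(1) n3 h2 h(6), folded t_def]
      have x: "t (p 3) \<noteq> 3" using t2 h(6) by simp
      show "y \<in> Q2b" unfolding p(2) Q2b_def Q_def using T h tn x by auto
    qed
  qed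
  show ?thesis unfolding pndQ c2 c3 ca cb ..
qed


end
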